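(* Let $k\ge1$, let $(A,t)$ be a $\mathcal{C}_k$-algebra and let $M\subseteq A$ be a proper cyclic deductive system. The following are equivalent: (1) $M$ is maximal; (2) for every $a\notin M$ there exists $m\in M$ with $\bigwedge_{j=1}^{k}t^j(\triangle a)\wedge m=0$; (3) for all $a,b\in A$, if $\bigwedge_{j=1}^{k}t^j(\triangle a)\vee b\in M$, then $a\in M$ or $b\in M$; (4) for every $a\notin M$, $\sim\triangle\bigwedge_{j=1}^{k}t^j(a)\in M$; (5) for all $a,b\notin M$, $a\rightharpoondown b\in M$ and $b\rightharpoondown a\in M$.
   Context: A modal pseudocomplemented De Morgan algebra ($mpM$-algebra) is an algebra $\langle A,\wedge,\vee,\sim,{}^\ast,0,1\rangle$ such that $\langle A,\wedge,\vee,\sim,0,1\rangle$ is a De Morgan algebra (bounded distributive lattice with $\sim\sim x=x$, $\sim(x\vee y)=\sim x\wedge\sim y$), $x^\ast$ is the pseudocomplement of $x$, and $x\vee\sim x\le x\vee x^\ast$. Put $\nabla x=\sim(\sim x\wedge x^\ast)$, $\triangle x=\sim\nabla\sim x$. A $\mathcal{C}_k$-algebra ($k\ge1$) is a pair $(A,t)$ with $A$ an $mpM$-algebra and $t$ an $mpM$-automorphism of $A$ with $t^k=\mathrm{id}$. The cyclic implication is $a\rightharpoondown b=\bigvee_{i=1}^{k}\nabla(\sim t^i(a))\vee b$. A cyclic deductive system is a set $D\subseteq A$ with $1\in D$ such that $x,\,x\rightharpoondown y\in D$ imply $y\in D$; it is maximal if it is maximal among proper cyclic deductive systems. *)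

theory Defs
  imports Main
begin

text \<open>An algebra of signature (meet, join, neg = De Morgan negation, pc = pseudocomplement, bot, top)
  whose universe is the whole type 'a.\<close>
record 'a mpm =
  meet :: "'a \<Rightarrow> 'a \<Rightarrow> 'a"
  join :: "'a \<Rightarrow> 'a \<Rightarrow> 'a"
  neg  :: "'a \<Rightarrow> 'a"
  pc   :: "'a \<Rightarrow> 'a"
  bot  :: 'a
  top  :: 'a

definition le :: "'a mpm \<Rightarrow> 'a \<Rightarrow> 'a \<Rightarrow> bool" where
  "le A x y \<longleftrightarrow> meet A x y = x"

definition bdl :: "'a mpm \<Rightarrow> bool" where
  "bdl A \<longleftrightarrow>
     (\<forall>x y z. meet A (meet A x y) z = meet A x (meet A y z)) \<and>
     (\<forall>x y z. join A (join A x y) z = join A x (join A y z)) \<and>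
     (\<forall>x y. meet A x y = meet A y x) \<and>
     (\<forall>x y. join A x y = join A y x) \<and>
     (\<forall>x y. meet A x (join A x y) = x) \<and>
     (\<forall>x y. join A x (meet A x y) = x) \<and>
     (\<forall>x y z. meet A x (join A y z) = join A (meet A x y) (meet A x z)) \<and>
     (\<forall>x. join A x (bot A) = x) \<and>
     (\<forall>x. meet A x (top A) = x)"

definition de_morgan :: "'a mpm \<Rightarrow> bool" where
  "de_morgan A \<longleftrightarrow> bdl A \<and>
     (\<forall>x. neg A (neg A x) = x) \<and>
     (\<forall>x y. neg A (join A x y) = meet A (neg A x) (neg A y))"

definition mpM_algebra :: "'a mpm \<Rightarrow> bool" where
  "mpM_algebra A \<longleftrightarrow> de_morgan A \<and>
     (\<forall>x y. meet A y x = bot A \<longleftrightarrow> le A y (pc A x)) \<and>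
     (\<forall>x. le A (join A x (neg A x)) (join A x (pc A x)))"

definition nabla :: "'a mpm \<Rightarrow> 'a \<Rightarrow> 'a" where
  "nabla A x = neg A (meet A (neg A x) (pc A x))"

definition triangle :: "'a mpm \<Rightarrow> 'a \<Rightarrow> 'a" where
  "triangle A x = neg A (nabla A (neg A x))"

definition mpM_automorphism :: "'a mpm \<Rightarrow> ('a \<Rightarrow> 'a) \<Rightarrow> bool" where
  "mpM_automorphism A t \<longleftrightarrow> bij t \<and>
     (\<forall>x y. t (meet A x y) = meet A (t x) (t y)) \<and>
     (\<forall>x y. t (join A x y) = join A (t x) (t y)) \<and>
     (\<forall>x. t (neg A x) = neg A (t x)) \<and>
     (\<forall>x. t (pc A x) = pc A (t x)) \<and>
     t (bot A) = bot A \<and> t (top A) = top A"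

definition Ck_algebra :: "'a mpm \<Rightarrow> ('a \<Rightarrow> 'a) \<Rightarrow> nat \<Rightarrow> bool" where
  "Ck_algebra A t k \<longleftrightarrow> mpM_algebra A \<and> mpM_automorphism A t \<and> t ^^ k = id"

text \<open>Finite joins/meets over indices 1..n.\<close>
fun bigjoin :: "'a mpm \<Rightarrow> (nat \<Rightarrow> 'a) \<Rightarrow> nat \<Rightarrow> 'a" where
  "bigjoin A f 0 = bot A"
| "bigjoin A f (Suc n) = join A (bigjoin A f n) (f (Suc n))"

fun bigmeet :: "'a mpm \<Rightarrow> (nat \<Rightarrow> 'a) \<Rightarrow> nat \<Rightarrow> 'a" where
  "bigmeet A f 0 = top A"
| "bigmeet A f (Suc n) = meet A (bigmeet A f n) (f (Suc n))"

definition cimp :: "'a mpm \<Rightarrow> ('a \<Rightarrow> 'a) \<Rightarrow> nat \<Rightarrow> 'a \<Rightarrow> 'a \<Rightarrow> 'a" where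
  "cimp A t k a b = join A (bigjoin A (\<lambda>i. nabla A (neg A ((t ^^ i) a))) k) b"

definition cyclic_ds :: "'a mpm \<Rightarrow> ('a \<Rightarrow> 'a) \<Rightarrow> nat \<Rightarrow> 'a set \<Rightarrow> bool" where
  "cyclic_ds A t k D \<longleftrightarrow> top A \<in> D \<and> (\<forall>x y. x \<in> D \<longrightarrow> cimp A t k x y \<in> D \<longrightarrow> y \<in> D)"

definition maximal_cyclic_ds :: "'a mpm \<Rightarrow> ('a \<Rightarrow> 'a) \<Rightarrow> nat \<Rightarrow> 'a set \<Rightarrow> bool" where
  "maximal_cyclic_ds A t k M \<longleftrightarrow> cyclic_ds A t k M \<and> M \<noteq> UNIV \<and>
     (\<forall>E. cyclic_ds A t k E \<and> E \<noteq> UNIV \<and> M \<subseteq> E \<longrightarrow> E = M)"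

end

theory Submission imports Defs begin
locale mpmA = fixes A :: "'a mpm" assumes alg: "mpM_algebra A"
begin
lemma bdl: "bdl A" using alg unfolding mpM_algebra_def de_morgan_def by auto
lemma massoc: "meet A (meet A x y) z = meet A x (meet A y z)" using bdl unfolding bdl_def by blast
lemma jassoc: "join A (join A x y) z = join A x (join A y z)" using bdl unfolding bdl_def by blast
lemma mcomm: "meet A x y = meet A y x" using bdl unfolding bdl_def by blast
lemma jcomm: "join A x y = join A y x" using bdl unfolding bdl_def by blast
lemma mabs: "meet A x (join A x y) = x" using bdl unfolding bdl_def by blast
lemma jabs: "join A x (meet A x y) = x" using bdl unfolding bdl_def by blast
lemma mdist: "meet A x (join A y z) = join A (meet A x y) (meet A x z)" using bdl unfolding bdl_def by blast
lemma jbot: "join A x (bot A) = x" using bdl unfolding bdl_def by blast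
lemma mtop: "meet A x (top A) = x" using bdl unfolding bdl_def by blast
lemma midem: "meet A x x = x" by (metis mabs jabs)
lemma jidem: "join A x x = x" by (metis mabs jabs)
lemma le_join: "le A x y \<longleftrightarrow> join A x y = y" unfolding le_def by (metis mabs jabs mcomm jcomm)
lemma jdist: "join A x (meet A y z) = meet A (join A x y) (join A x z)"
proof -
  have "meet A (join A x y) (join A x z) = join A (meet A (join A x y) x) (meet A (join A x y) z)"
    by (rule mdist)
  also have "\<dots> = join A x (join A (meet A x z) (meet A y z))"
    by (metis mabs mcomm jassoc mdist)
  also have "\<dots> = join A x (meet A y z)" by (metis jabs jassoc)
  finally show ?thesis by simp
qed
sublocale L: distrib_lattice "meet A" "le A" "\<lambda>x y. le A x y \<and> x \<noteq> y" "join A"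
proof (unfold_locales)
  show "\<And>x y z. join A x (meet A y z) = meet A (join A x y) (join A x z)" by (rule jdist)
qed (auto simp: le_def le_join, (metis massoc mcomm midem jassoc jcomm jidem mabs jabs)+)

lemma bot_le: "le A (bot A) x" unfolding le_join by (metis jbot jcomm)
lemma le_top: "le A x (top A)" unfolding le_def by (rule mtop)
lemma mbot: "meet A x (bot A) = bot A" using bot_le unfolding le_def by (metis mcomm)
lemma jtop: "join A x (top A) = top A" using le_top unfolding le_join by (metis)
lemma nn: "neg A (neg A x) = x" using alg unfolding mpM_algebra_def de_morgan_def by auto
lemma nj: "neg A (join A x y) = meet A (neg A x) (neg A y)" using alg unfolding mpM_algebra_def de_morgan_def by auto
lemma nm: "neg A (meet A x y) = join A (neg A x) (neg A y)" by (metis nn nj)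
lemma nanti: "le A x y \<Longrightarrow> le A (neg A y) (neg A x)"
proof -
  assume "le A x y" hence "join A x y = y" by (simp add: le_join)
  hence "neg A y = meet A (neg A x) (neg A y)" using nj by metis
  thus ?thesis unfolding le_def using mcomm by metis
qed
lemma nbot: "neg A (bot A) = top A"
proof -
  have "le A (neg A (neg A (top A))) (neg A (bot A))" by (rule nanti[OF bot_le])
  thus ?thesis using nn L.order.antisym le_top by metis
qed
lemma ntop: "neg A (top A) = bot A" by (metis nbot nn)
lemma pc_iff: "meet A y x = bot A \<longleftrightarrow> le A y (pc A x)" using alg unfolding mpM_algebra_def by auto
lemma cond: "le A (join A x (neg A x)) (join A x (pc A x))" using alg unfolding mpM_algebra_def by auto
lemma pc_m: "meet A (pc A x) x = bot A" using pc_iff L.order_refl by blast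
lemma pc_m': "meet A x (pc A x) = bot A" by (subst mcomm) (rule pc_m)
lemma bot_meet: "meet A (bot A) x = bot A" by (subst mcomm) (rule mbot)
lemma bot_join: "join A (bot A) x = x" by (subst jcomm) (rule jbot)
lemma le_bot: "le A x (bot A) \<Longrightarrow> x = bot A" using L.order.antisym bot_le by blast
lemma pc_j: "pc A (join A u v) = meet A (pc A u) (pc A v)"
proof (rule L.order.antisym)
  have "meet A (pc A (join A u v)) (join A u v) = bot A" by (rule pc_m)
  hence "meet A (pc A (join A u v)) u = bot A" "meet A (pc A (join A u v)) v = bot A"
    by (metis le_bot L.inf_mono L.order_refl L.sup_ge1 L.sup_ge2)+
  thus "le A (pc A (join A u v)) (meet A (pc A u) (pc A v))"
    using pc_iff L.le_inf_iff by blast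
  have "meet A (meet A (pc A u) (pc A v)) (join A u v) = bot A"
  proof -
    have "meet A u (meet A (pc A u) (pc A v)) = bot A" by (metis massoc pc_m' bot_meet)
    moreover have "meet A v (meet A (pc A u) (pc A v)) = bot A" by (metis L.inf_left_commute massoc pc_m' bot_meet)
    ultimately show ?thesis unfolding L.inf_sup_distrib1 by (simp add: mcomm jbot)
  qed
  then show "le A (meet A (pc A u) (pc A v)) (pc A (join A u v))"
    using pc_iff by blast
qed
lemma pc_bot: "pc A (bot A) = top A" by (metis L.order.antisym le_top mbot pc_iff)
lemma tri: "triangle A x = meet A x (pc A (neg A x))"
  unfolding triangle_def nabla_def by (simp add: nn nj)
lemma nabla_neg: "nabla A (neg A x) = neg A (triangle A x)"
  unfolding triangle_def by (simp add: nn)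
lemma tri_le: "le A (triangle A x) x" unfolding tri by simp

definition boolean where "boolean b \<longleftrightarrow> meet A b (neg A b) = bot A"
lemma boolean_join: "boolean b \<Longrightarrow> join A b (neg A b) = top A"
proof -
  assume "boolean b"
  hence "neg A (join A b (neg A b)) = bot A" unfolding boolean_def nj nn by (simp add: L.inf_aci)
  thus ?thesis by (metis nn nbot)
qed
lemma tri_boolean: "boolean (triangle A x)"
proof -
  define y where "y = neg A x"
  have x: "x = neg A y" using y_def nn by simp
  have c0: "le A (neg A (join A y (pc A y))) (neg A (join A y (neg A y)))"
    using nanti[OF cond[of y]] .
  have c: "le A (meet A (neg A y) (neg A (pc A y))) y"
    using c0 unfolding nj nn by (meson L.le_inf_iff)
  have "meet A (triangle A x) (neg A (triangle A x)) = 
     join A (meet A (meet A (neg A y) (pc A y)) y) (meet A (meet A (neg A y) (pc A y)) (neg A (pc A y)))"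
    unfolding tri x by (simp add: nn nm L.inf_sup_distrib1)
  also have "\<dots> = bot A"
  proof -
    have 1: "meet A (meet A (neg A y) (pc A y)) y = bot A" by (metis L.inf_left_commute mcomm pc_m' mbot massoc)
    have "le A (meet A (meet A (neg A y) (pc A y)) (neg A (pc A y))) (meet A (pc A y) (meet A (neg A y) (neg A (pc A y))))"
      by (simp add: L.inf_aci)
    also have "le A \<dots> (meet A (pc A y) y)" using c L.inf_mono L.order_refl by blast
    finally have "meet A (meet A (neg A y) (pc A y)) (neg A (pc A y)) = bot A"
      using pc_m le_bot by simp
    thus ?thesis using 1 jbot by simp
  qed
  finally show ?thesis unfolding boolean_def .
qed
lemma bool_pc: "boolean b \<Longrightarrow> pc A (neg A b) = b"
proof -
  assume b: "boolean b"
  hence 1: "le A b (pc A (neg A b))" using pc_iff unfolding boolean_def by blast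
  have "pc A (neg A b) = meet A (pc A (neg A b)) (join A b (neg A b))" using boolean_join[OF b] mtop by simp
  also have "\<dots> = meet A (pc A (neg A b)) b" unfolding L.inf_sup_distrib1 pc_m jbot ..
  finally have "le A (pc A (neg A b)) b" by (metis L.inf.cobounded2)
  thus ?thesis using 1 L.order.antisym by blast
qed
lemma bool_tri: "boolean b \<Longrightarrow> triangle A b = b"
  unfolding tri using bool_pc midem by simp
lemma boolean_meet: "boolean a \<Longrightarrow> boolean b \<Longrightarrow> boolean (meet A a b)"
  unfolding boolean_def nm L.inf_sup_distrib1
  by (metis L.inf_left_commute massoc mcomm mbot jbot)
lemma boolean_top: "boolean (top A)" unfolding boolean_def ntop mbot ..
lemma tri_meet: "triangle A (meet A x y) = meet A (triangle A x) (triangle A y)"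
  unfolding tri nm pc_j by (simp add: L.inf_aci)
lemma tri_top: "triangle A (top A) = top A" unfolding tri ntop pc_bot midem ..

lemma bm_meet: "meet A (bigmeet A f n) (bigmeet A g n) = bigmeet A (\<lambda>j. meet A (f j) (g j)) n"
  by (induction n) (simp_all add: midem L.inf_aci)
lemma bm_tri: "triangle A (bigmeet A f n) = bigmeet A (\<lambda>j. triangle A (f j)) n"
  by (induction n) (simp_all add: tri_top tri_meet)
lemma bm_bool: "(\<And>j. boolean (f j)) \<Longrightarrow> boolean (bigmeet A f n)"
  by (induction n) (simp_all add: boolean_top boolean_meet)
lemma bj_neg: "bigjoin A (\<lambda>j. neg A (f j)) n = neg A (bigmeet A f n)"
  by (induction n) (simp_all add: ntop nm)
lemma bm_shift: "bigmeet A f (Suc n) = meet A (f 1) (bigmeet A (\<lambda>j. f (Suc j)) n)"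
  by (induction n) (simp_all add: mtop L.inf_aci)
lemma bm_const: "bigmeet A (\<lambda>j. b) (Suc n) = b"
  by (induction n) (simp_all add: mtop mcomm midem)
lemma bm_top: "bigmeet A (\<lambda>j. top A) n = top A"
  by (induction n) (simp_all add: mtop)
end

locale cyc = mpmA + fixes t :: "'a \<Rightarrow> 'a" and k :: nat
  assumes ck: "Ck_algebra A t k" and k1: "k \<ge> 1"
begin
lemma aut: "mpM_automorphism A t" using ck unfolding Ck_algebra_def by blast
lemma tk: "t ^^ k = id" using ck unfolding Ck_algebra_def by blast
lemma t_meet: "(t^^i) (meet A x y) = meet A ((t^^i) x) ((t^^i) y)"
  using aut unfolding mpM_automorphism_def by (induction i) auto
lemma t_join: "(t^^i) (join A x y) = join A ((t^^i) x) ((t^^i) y)"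
  using aut unfolding mpM_automorphism_def by (induction i) auto
lemma t_neg: "(t^^i) (neg A x) = neg A ((t^^i) x)"
  using aut unfolding mpM_automorphism_def by (induction i) auto
lemma t_pc: "(t^^i) (pc A x) = pc A ((t^^i) x)"
  using aut unfolding mpM_automorphism_def by (induction i) auto
lemma t_top: "(t^^i) (top A) = top A"
  using aut unfolding mpM_automorphism_def by (induction i) auto
lemma t_tri: "(t^^i) (triangle A x) = triangle A ((t^^i) x)"
  unfolding tri t_meet t_neg t_pc ..
lemma t_bot: "(t^^i) (bot A) = bot A"
  using aut unfolding mpM_automorphism_def by (induction i) auto
lemma t_bool: "boolean b \<Longrightarrow> boolean ((t^^i) b)"
  unfolding boolean_def by (metis t_meet t_neg t_bot)
lemma tkx: "(t^^k) x = x" using tk by simp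
lemma t_bm: "(t^^i) (bigmeet A f n) = bigmeet A (\<lambda>j. (t^^i) (f j)) n"
  by (induction n) (simp_all add: t_top t_meet)

definition c where "c x = bigmeet A (\<lambda>j. (t^^j) (triangle A x)) k"
lemma c_bool: "boolean (c x)" unfolding c_def by (rule bm_bool, rule t_bool, rule tri_boolean)
lemma c_le: "le A (c x) x"
proof -
  obtain k' where k: "k = Suc k'" using k1 by (cases k) auto
  have "c x = meet A (bigmeet A (\<lambda>j. (t^^j) (triangle A x)) k') ((t^^(Suc k')) (triangle A x))"
    unfolding c_def by (simp only: k bigmeet.simps)
  hence "c x = meet A (bigmeet A (\<lambda>j. (t^^j) (triangle A x)) k') (triangle A x)"
    using tkx k by simp
  hence "le A (c x) (triangle A x)" by simp
  thus ?thesis using tri_le L.order.trans by blast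
qed
lemma c_meet: "c (meet A x y) = meet A (c x) (c y)"
  unfolding c_def bm_meet tri_meet t_meet ..
lemma c_top: "c (top A) = top A"
  unfolding c_def tri_top t_top bm_top ..
lemma c_t: "t (c x) = c x"
proof -
  obtain k' where k: "k = Suc k'" using k1 by (cases k) auto
  have "t (c x) = (t^^1) (c x)" by simp
  also have "\<dots> = bigmeet A (\<lambda>j. (t^^(Suc j)) (triangle A x)) k"
    unfolding c_def t_bm by (simp add: funpow_swap1)
  also have "\<dots> = meet A (bigmeet A (\<lambda>j. (t^^(Suc j)) (triangle A x)) k') ((t^^(Suc k)) (triangle A x))"
    unfolding k by (simp only: bigmeet.simps)
  also have "(t^^(Suc k)) (triangle A x) = (t^^1) (triangle A x)"
    using tkx by (simp add: funpow_swap1)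
  also have "meet A (bigmeet A (\<lambda>j. (t^^(Suc j)) (triangle A x)) k') ((t^^1) (triangle A x)) = c x"
    unfolding c_def by (simp only: k bm_shift mcomm)
  finally show ?thesis .
qed
lemma c_tj: "(t^^i) (c x) = c x"
  by (induction i) (simp_all add: c_t)
lemma c_c: "c (c x) = c x"
proof -
  obtain k' where k: "k = Suc k'" using k1 by (cases k) auto
  have "c (c x) = bigmeet A (\<lambda>j. c x) k" unfolding c_def[of "c x"] bool_tri[OF c_bool] c_tj ..
  thus ?thesis unfolding k bm_const .
qed
lemma cimp_eq: "cimp A t k a b = join A (neg A (c a)) b"
  unfolding cimp_def c_def nabla_neg t_tri[symmetric] bj_neg ..
lemma tri_bm: "triangle A (bigmeet A (\<lambda>j. (t^^j) a) k) = c a"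
  unfolding c_def bm_tri t_tri ..
lemma c_mono: "le A x y \<Longrightarrow> le A (c x) (c y)"
  unfolding le_def by (metis c_meet)
lemma c_top_le: "le A (c x) y \<Longrightarrow> join A (neg A (c x)) y = top A"
proof -
  assume "le A (c x) y"
  hence "le A (join A (neg A (c x)) (c x)) (join A (neg A (c x)) y)"
    using L.sup_mono L.order_refl by blast
  hence "le A (top A) (join A (neg A (c x)) y)" using boolean_join[OF c_bool] jcomm by metis
  thus ?thesis using le_top L.order.antisym by blast
qed

context fixes D assumes ds: "cyclic_ds A t k D"
begin
lemma ds_top: "top A \<in> D" using ds unfolding cyclic_ds_def by blast
lemma ds_mp: "x \<in> D \<Longrightarrow> join A (neg A (c x)) y \<in> D \<Longrightarrow> y \<in> D"
  using ds unfolding cyclic_ds_def cimp_eq by blast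
lemma ds_up: "x \<in> D \<Longrightarrow> le A x y \<Longrightarrow> y \<in> D"
proof -
  assume x: "x \<in> D" and "le A x y"
  hence "le A (c x) y" using L.order.trans[OF c_le] by blast
  hence "join A (neg A (c x)) y = top A" by (rule c_top_le)
  thus ?thesis using ds_mp[OF x] ds_top by simp
qed
lemma ds_c: "x \<in> D \<Longrightarrow> c x \<in> D"
proof -
  assume x: "x \<in> D"
  have "join A (neg A (c x)) (c x) = top A" by (rule c_top_le[OF L.order_refl])
  thus ?thesis using ds_mp[OF x] ds_top by simp
qed
lemma ds_meet: "x \<in> D \<Longrightarrow> y \<in> D \<Longrightarrow> meet A x y \<in> D"
proof -
  assume x: "x \<in> D" and y: "y \<in> D"
  have "c x = meet A (c x) (join A (c y) (neg A (c y)))" using boolean_join[OF c_bool] mtop by simp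
  also have "\<dots> = join A (meet A (c x) (c y)) (meet A (c x) (neg A (c y)))" by (rule mdist)
  also have "le A \<dots> (join A (neg A (c y)) (meet A x y))"
  proof -
    have "le A (meet A (c x) (c y)) (meet A x y)" using c_le L.inf_mono by blast
    moreover have "le A (meet A (c x) (neg A (c y))) (neg A (c y))" by simp
    ultimately show ?thesis by (meson L.le_sup_iff L.sup_ge1 L.sup_ge2 L.order.trans)
  qed
  finally have "join A (neg A (c x)) (join A (neg A (c y)) (meet A x y)) = top A" by (rule c_top_le)
  hence "join A (neg A (c y)) (meet A x y) \<in> D" using ds_mp[OF x] ds_top by simp
  thus ?thesis using y ds_mp by blast
qed
lemma ds_bot: "D \<noteq> UNIV \<Longrightarrow> bot A \<notin> D"
  using ds_up bot_le by blast
end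

definition gen where "gen M a = {y. \<exists>m\<in>M. le A (meet A (c a) (c m)) y}"
lemma gen_ds: assumes M: "cyclic_ds A t k M" shows "cyclic_ds A t k (gen M a)"
  unfolding cyclic_ds_def
proof (intro conjI allI impI)
  show "top A \<in> gen M a" unfolding gen_def using ds_top[OF M] le_top by blast
  fix x y assume "x \<in> gen M a" "cimp A t k x y \<in> gen M a"
  then obtain m m' where m: "m \<in> M" "le A (meet A (c a) (c m)) x"
    and m': "m' \<in> M" "le A (meet A (c a) (c m')) (join A (neg A (c x)) y)"
    unfolding gen_def cimp_eq by blast
  have "c (meet A (c a) (c m)) = meet A (c a) (c m)" by (simp add: c_meet c_c)
  hence 1: "le A (meet A (c a) (c m)) (c x)" using c_mono[OF m(2)] by simp
  let ?w = "meet A (c a) (c (meet A m m'))"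
  have "?w = meet A (meet A (c a) (c m)) (meet A (c a) (c m'))" by (simp add: c_meet L.inf_aci midem)
  hence "le A ?w (meet A (c x) (join A (neg A (c x)) y))" using L.inf_mono[OF 1 m'(2)] by simp
  also have "meet A (c x) (join A (neg A (c x)) y) = meet A (c x) y"
    using c_bool[of x] unfolding boolean_def mdist by (simp add: bot_join)
  also have "le A \<dots> y" by simp
  finally show "y \<in> gen M a" unfolding gen_def using ds_meet[OF M m(1) m'(1)] by blast
qed
lemma gen_sup: "cyclic_ds A t k M \<Longrightarrow> M \<subseteq> gen M a"
proof
  fix x assume M: "cyclic_ds A t k M" and "x \<in> M"
  have "le A (meet A (c a) (c x)) x" using L.order.trans[OF L.inf.cobounded2 c_le] .
  thus "x \<in> gen M a" unfolding gen_def using \<open>x \<in> M\<close> by blast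
qed
lemma gen_a: "cyclic_ds A t k M \<Longrightarrow> a \<in> gen M a"
proof -
  assume M: "cyclic_ds A t k M"
  have "le A (meet A (c a) (c (top A))) a" unfolding c_top mtop by (rule c_le)
  thus ?thesis unfolding gen_def using ds_top[OF M] by blast
qed

lemma main:
  assumes M: "cyclic_ds A t k M" and MU: "M \<noteq> UNIV"
  shows "(maximal_cyclic_ds A t k M \<longrightarrow> (\<forall>a. a \<notin> M \<longrightarrow> (\<exists>m\<in>M. meet A (c a) m = bot A)))
   \<and> ((\<forall>a. a \<notin> M \<longrightarrow> (\<exists>m\<in>M. meet A (c a) m = bot A)) \<longrightarrow>
       (\<forall>a b. join A (c a) b \<in> M \<longrightarrow> a \<in> M \<or> b \<in> M))
   \<and> ((\<forall>a b. join A (c a) b \<in> M \<longrightarrow> a \<in> M \<or> b \<in> M) \<longrightarrow>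
       (\<forall>a. a \<notin> M \<longrightarrow> neg A (c a) \<in> M))
   \<and> ((\<forall>a. a \<notin> M \<longrightarrow> neg A (c a) \<in> M) \<longrightarrow>
       (\<forall>a b. a \<notin> M \<and> b \<notin> M \<longrightarrow> cimp A t k a b \<in> M \<and> cimp A t k b a \<in> M))
   \<and> ((\<forall>a b. a \<notin> M \<and> b \<notin> M \<longrightarrow> cimp A t k a b \<in> M \<and> cimp A t k b a \<in> M)
       \<longrightarrow> maximal_cyclic_ds A t k M)"
proof (intro conjI impI allI)
  assume mx: "maximal_cyclic_ds A t k M"
  fix a assume a: "a \<notin> M"
  have "gen M a \<noteq> M" using gen_a[OF M] a by blast
  hence "gen M a = UNIV" using mx gen_ds[OF M] gen_sup[OF M] unfolding maximal_cyclic_ds_def by blast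
  then obtain m where m: "m \<in> M" "le A (meet A (c a) (c m)) (bot A)" unfolding gen_def by blast
  show "\<exists>m\<in>M. meet A (c a) m = bot A" using m ds_c[OF M] le_bot by blast
next
  assume P2: "\<forall>a. a \<notin> M \<longrightarrow> (\<exists>m\<in>M. meet A (c a) m = bot A)"
  fix a b assume ab: "join A (c a) b \<in> M"
  show "a \<in> M \<or> b \<in> M"
  proof (cases "a \<in> M")
    case False
    then obtain m where m: "m \<in> M" "meet A (c a) m = bot A" using P2 False by blast
    have "m = meet A m (join A (c a) (neg A (c a)))" using boolean_join[OF c_bool] mtop by simp
    also have "\<dots> = meet A m (neg A (c a))" using m(2) unfolding mdist by (simp add: mcomm bot_join)
    finally have "le A m (neg A (c a))" unfolding le_def by simp
    hence n: "neg A (c a) \<in> M" using ds_up[OF M m(1)] by blast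
    have "meet A (join A (c a) b) (neg A (c a)) = meet A b (neg A (c a))"
      using c_bool[of a] unfolding boolean_def by (simp add: L.inf_sup_distrib2 bot_join)
    hence "meet A b (neg A (c a)) \<in> M" using ds_meet[OF M ab n] by simp
    thus ?thesis using ds_up[OF M] by (meson L.inf.cobounded1)
  qed simp
next
  assume P3: "\<forall>a b. join A (c a) b \<in> M \<longrightarrow> a \<in> M \<or> b \<in> M"
  fix a assume "a \<notin> M"
  moreover have "join A (c a) (neg A (c a)) \<in> M" using boolean_join[OF c_bool] ds_top[OF M] by simp
  ultimately show "neg A (c a) \<in> M" using P3 by blast
next
  assume P4: "\<forall>a. a \<notin> M \<longrightarrow> neg A (c a) \<in> M"
  fix a b assume "a \<notin> M \<and> b \<notin> M"
  thus "cimp A t k a b \<in> M" "cimp A t k b a \<in> M" unfolding cimp_eq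
    using P4 ds_up[OF M] L.sup_ge1 by blast+
next
  assume P5: "\<forall>a b. a \<notin> M \<and> b \<notin> M \<longrightarrow> cimp A t k a b \<in> M \<and> cimp A t k b a \<in> M"
  show "maximal_cyclic_ds A t k M" unfolding maximal_cyclic_ds_def
  proof (intro conjI allI impI M MU)
    fix E assume E: "cyclic_ds A t k E \<and> E \<noteq> UNIV \<and> M \<subseteq> E"
    then obtain y where y: "y \<notin> E" by blast
    show "E = M"
    proof (rule ccontr)
      assume "E \<noteq> M"
      then obtain x where "x \<in> E" "x \<notin> M" using E by blast
      moreover have "y \<notin> M" using y E by blast
      ultimately have "cimp A t k x y \<in> E" using P5 E by blast
      hence "y \<in> E" using \<open>x \<in> E\<close> E unfolding cyclic_ds_def by blast
      thus False using y by blast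
    qed
  qed
qed
end

theorem theorem4p3:
  fixes A :: "'a mpm" and t :: "'a \<Rightarrow> 'a" and k :: nat and M :: "'a set"
  assumes "k \<ge> 1"
    and "Ck_algebra A t k"
    and "cyclic_ds A t k M"
    and "M \<noteq> UNIV"
  defines "P1 \<equiv> maximal_cyclic_ds A t k M"
    and "P2 \<equiv> (\<forall>a. a \<notin> M \<longrightarrow> (\<exists>m\<in>M.
                 meet A (bigmeet A (\<lambda>j. (t ^^ j) (triangle A a)) k) m = bot A))"
    and "P3 \<equiv> (\<forall>a b. join A (bigmeet A (\<lambda>j. (t ^^ j) (triangle A a)) k) b \<in> M
                 \<longrightarrow> a \<in> M \<or> b \<in> M)"
    and "P4 \<equiv> (\<forall>a. a \<notin> M \<longrightarrow> neg A (triangle A (bigmeet A (\<lambda>j. (t ^^ j) a) k)) \<in> M)"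
    and "P5 \<equiv> (\<forall>a b. a \<notin> M \<and> b \<notin> M \<longrightarrow> cimp A t k a b \<in> M \<and> cimp A t k b a \<in> M)"
  shows "(P1 \<longleftrightarrow> P2) \<and> (P2 \<longleftrightarrow> P3) \<and> (P3 \<longleftrightarrow> P4) \<and> (P4 \<longleftrightarrow> P5)"
proof -
  interpret cyc A t k
    using assms(1,2) unfolding cyc_def cyc_axioms_def mpmA_def Ck_algebra_def by blast
  have P2: "P2 = (\<forall>a. a \<notin> M \<longrightarrow> (\<exists>m\<in>M. meet A (c a) m = bot A))"
    unfolding P2_def c_def ..
  have P3: "P3 = (\<forall>a b. join A (c a) b \<in> M \<longrightarrow> a \<in> M \<or> b \<in> M)"
    unfolding P3_def c_def ..
  have P4: "P4 = (\<forall>a. a \<notin> M \<longrightarrow> neg A (c a) \<in> M)"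
    unfolding P4_def tri_bm ..
  show ?thesis using main[OF assms(3,4)] unfolding P1_def P2 P3 P4 P5_def by blast
qed

end
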